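(* Use of the Euler-Poincar\'e (EP) theorem yields the following Kelvin circulation theorem \begin{align} \frac{d}{dt}\oint_{c(\mathbf{\widehat v})} \big( \mathbf{\widehat{v}}\cdot d\mathbf{r} + \sigma^2\widehat{w}\,d\zeta\big) = - \oint_{c(\mathbf{\widehat v})} \frac{1}{\rho}d{\widetilde p}\,. \end{align}
   Context: Setting: a 2D free surface model (composition of maps) in which the horizontal current is a flow map $\phi_t:\mathbb{R}^2\to\mathbb{R}^2$ with velocity $\mathbf{\widehat v}(\mathbf{r},t)$, and the wave is a vertical elevation $\zeta(\mathbf{r},t)$ carried by the current, with vertical velocity $\widehat{w} = \partial_t\zeta + \mathbf{\widehat{v}}\cdot\nabla_{\mathbf{r}}\zeta$. The dynamics follow from Hamilton's principle $0=\delta\int_a^b \ell\,dt$ with $\ell(\mathbf{\widehat{v}},\zeta,D,\rho)=\int_{\cal D}\Big( \tfrac{1}{2}\big( |\mathbf{\widehat{v}}|^2 + \sigma^2\widehat w^2 \big) - \tfrac{\rho_{ref}}{\rho} \tfrac{\zeta^2}{2Fr^2} \Big) D\rho - p(D-1)\,d^2r$, where $\sigma^2$ (squared aspect ratio) and $Fr^2$ (squared Froude number) are dimensionless constants, $\rho_{ref}$ is a constant reference density, the areal density $D\,d^2r$ and buoyancy $\rho$ are advected by $\mathbf{\widehat v}$ ($\partial_t D + \mathrm{div}(D\mathbf{\widehat v})=0$, $\partial_t\rho+\mathbf{\widehat v}\cdot\nabla\rho=0$), and the pressure $p$ is a Lagrange multiplier enforcing $D=1$, i.e. $\mathrm{div}\,\mathbf{\widehat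 v}=0$. Here $\widetilde p := p + \rho_{ref}\zeta^2/(2Fr^2)$, and $c(\mathbf{\widehat v})$ is a closed loop moving with the horizontal flow velocity $\mathbf{\widehat v}$. *)

theory Defs
  imports "HOL-Analysis.Analysis"
begin

definition C1_on :: "'a set \<Rightarrow> ('a::real_normed_vector \<Rightarrow> 'b::real_normed_vector) \<Rightarrow> bool" where
  "C1_on S f \<longleftrightarrow> (\<forall>z\<in>S. f differentiable (at z)) \<and>
      (\<forall>u. continuous_on S (\<lambda>z. frechet_derivative f (at z) u))"

definition pt :: "(real \<Rightarrow> 'x \<Rightarrow> 'b::real_normed_vector) \<Rightarrow> real \<Rightarrow> 'x \<Rightarrow> 'b" where
  "pt f t x = vector_derivative (\<lambda>s. f s x) (at t)"

definition dirD :: "(real^2 \<Rightarrow> 'b::real_normed_vector) \<Rightarrow> real^2 \<Rightarrow> real^2 \<Rightarrow> 'b" where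
  "dirD F x u = vector_derivative (\<lambda>h. F (x + h *\<^sub>R u)) (at 0)"

definition grad :: "(real^2 \<Rightarrow> real) \<Rightarrow> real^2 \<Rightarrow> real^2" where
  "grad f x = (\<chi> i. dirD f x (axis i 1))"

definition div2 :: "(real^2 \<Rightarrow> real^2) \<Rightarrow> real^2 \<Rightarrow> real" where
  "div2 V x = (\<Sum>i\<in>UNIV. (dirD V x (axis i 1)) $ i)"

definition gradT :: "(real^2 \<Rightarrow> real^2) \<Rightarrow> real^2 \<Rightarrow> real^2 \<Rightarrow> real^2" where
  "gradT V x M = (\<chi> i. M \<bullet> dirD V x (axis i 1))"

text \<open>Lagrangian density of the model, as a function of the pointwise values
  v, zeta_t, grad zeta, zeta, D, rho, p (with w = zeta_t + v . grad zeta):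
  (1/2 (|v|^2 + sigma^2 w^2) - (rho_ref/rho) zeta^2/(2 Fr^2)) D rho - p (D - 1).\<close>
definition Lden :: "real \<Rightarrow> real \<Rightarrow> real \<Rightarrow> real^2 \<Rightarrow> real \<Rightarrow> real^2 \<Rightarrow> real \<Rightarrow> real \<Rightarrow> real \<Rightarrow> real \<Rightarrow> real" where
  "Lden \<sigma> Fr \<rho>ref vv zt gz z Dd r pp =
     (1/2 * (vv \<bullet> vv + \<sigma>^2 * (zt + vv \<bullet> gz)^2) - \<rho>ref / r * z^2 / (2 * Fr^2)) * Dd * r
     - pp * (Dd - 1)"

text \<open>Variational derivatives of ell (the integrand contains no spatial
  derivatives of v, D, rho, so these are pointwise partial derivatives).\<close>
definition dL_dv where
  "dL_dv \<sigma> Fr \<rho>ref vv zt gz z Dd r pp =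
     (\<chi> i. dirD (\<lambda>u. Lden \<sigma> Fr \<rho>ref u zt gz z Dd r pp) vv (axis i 1))"

definition dL_dD where
  "dL_dD \<sigma> Fr \<rho>ref vv zt gz z Dd r pp = deriv (\<lambda>d. Lden \<sigma> Fr \<rho>ref vv zt gz z d r pp) Dd"

definition dL_drho where
  "dL_drho \<sigma> Fr \<rho>ref vv zt gz z Dd r pp = deriv (\<lambda>s. Lden \<sigma> Fr \<rho>ref vv zt gz z Dd s pp) r"

end

theory Submission
  imports Defs
begin


definition C1d :: "'a::real_normed_vector set \<Rightarrow> ('a \<Rightarrow> 'b::real_normed_vector) \<Rightarrow> ('a \<Rightarrow> 'a \<Rightarrow> 'b) \<Rightarrow> bool" where
  "C1d S f f' \<longleftrightarrow> (\<forall>z\<in>S. (f has_derivative f' z) (at z)) \<and> (\<forall>u. continuous_on S (\<lambda>z. f' z u))"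

lemma C1d_of_C1_on: "C1_on S f \<Longrightarrow> C1d S f (\<lambda>z. frechet_derivative f (at z))"
  unfolding C1_on_def C1d_def using frechet_derivative_works by blast

lemma C1d_D: "C1d S f f' \<Longrightarrow> z \<in> S \<Longrightarrow> (f has_derivative f' z) (at z)"
  unfolding C1d_def by blast

lemma C1d_contD: "C1d S f f' \<Longrightarrow> continuous_on S (\<lambda>z. f' z u)"
  unfolding C1d_def by blast

lemma C1d_cont: "C1d S f f' \<Longrightarrow> continuous_on S f"
  unfolding C1d_def by (meson continuous_at_imp_continuous_on has_derivative_continuous)

lemma C1d_add: "C1d S f f' \<Longrightarrow> C1d S g g' \<Longrightarrow> C1d S (\<lambda>z. f z + g z) (\<lambda>z h. f' z h + g' z h)"
  unfolding C1d_def by (auto intro!: derivative_intros continuous_intros)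

lemma C1d_diff: "C1d S f f' \<Longrightarrow> C1d S g g' \<Longrightarrow> C1d S (\<lambda>z. f z - g z) (\<lambda>z h. f' z h - g' z h)"
  unfolding C1d_def by (auto intro!: derivative_intros continuous_intros)

lemma C1d_cmult: fixes f :: "_ \<Rightarrow> real" shows "C1d S f f' \<Longrightarrow> C1d S (\<lambda>z. a * f z) (\<lambda>z h. a * f' z h)"
  unfolding C1d_def by (auto intro!: derivative_intros continuous_intros)

lemma C1d_mult: fixes f g :: "_ \<Rightarrow> real"
  assumes "C1d S f f'" "C1d S g g'"
  shows "C1d S (\<lambda>z. f z * g z) (\<lambda>z h. f z * g' z h + f' z h * g z)"
  using assms C1d_cont[OF assms(1)] C1d_cont[OF assms(2)]
  unfolding C1d_def by (auto intro!: derivative_intros continuous_intros)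

lemma C1d_scaleR: fixes f :: "_ \<Rightarrow> real"
  assumes "C1d S f f'" "C1d S g g'"
  shows "C1d S (\<lambda>z. f z *\<^sub>R g z) (\<lambda>z h. f z *\<^sub>R g' z h + f' z h *\<^sub>R g z)"
  using assms C1d_cont[OF assms(1)] C1d_cont[OF assms(2)]
  unfolding C1d_def by (auto intro!: derivative_intros continuous_intros)

lemma C1d_inner:
  assumes "C1d S f f'" "C1d S g g'"
  shows "C1d S (\<lambda>z. f z \<bullet> g z) (\<lambda>z h. f z \<bullet> g' z h + f' z h \<bullet> g z)"
  using assms C1d_cont[OF assms(1)] C1d_cont[OF assms(2)]
  unfolding C1d_def by (auto intro!: derivative_intros continuous_intros)

lemma C1d_transform:
  assumes "C1d S f f'" "open S" "\<And>z. z \<in> S \<Longrightarrow> f z = g z"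
  shows "C1d S g f'"
  using assms unfolding C1d_def by (metis has_derivative_transform_within_open)

lemma vec2_expand: "(\<Sum>i\<in>UNIV. (x $ i) *\<^sub>R axis i (1::real)) = (x::real^'n)"
  using basis_expansion[of x] by (simp add: scalar_mult_eq_scaleR)

lemma lin_expand:
  assumes "linear f"
  shows "f (x::real^'n) = (\<Sum>i\<in>UNIV. (x $ i) *\<^sub>R f (axis i 1))"
proof -
  have "f x = f (\<Sum>i\<in>UNIV. (x $ i) *\<^sub>R axis i (1::real))" by (simp add: vec2_expand)
  also have "\<dots> = (\<Sum>i\<in>UNIV. (x $ i) *\<^sub>R f (axis i 1))"
    by (simp add: linear_sum[OF assms] linear_cmul[OF assms])
  finally show ?thesis .
qed

lemma dirD_pair:
  fixes F :: "real \<Rightarrow> real^2 \<Rightarrow> 'b::real_normed_vector"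
  assumes "((\<lambda>(s,y). F s y) has_derivative F') (at (t,x))"
  shows "dirD (F t) x u = F' (0,u)"
proof -
  have c: "((\<lambda>h. (t, x + h *\<^sub>R u)) has_vector_derivative (0,u)) (at 0)"
    by (auto intro!: derivative_eq_intros)
  have "(((\<lambda>(s,y). F s y) \<circ> (\<lambda>h. (t, x + h *\<^sub>R u))) has_vector_derivative F' (0,u)) (at 0)"
    by (rule vector_derivative_diff_chain_within[OF c]) (use assms has_derivative_at_withinI in auto)
  then show ?thesis unfolding dirD_def by (simp add: o_def vector_derivative_at)
qed

lemma pt_pair:
  fixes F :: "real \<Rightarrow> 'a::real_normed_vector \<Rightarrow> 'b::real_normed_vector"
  assumes "((\<lambda>(s,y). F s y) has_derivative F') (at (t,x))"
  shows "pt F t x = F' (1,0)"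
proof -
  have c: "((\<lambda>h. (h, x)) has_vector_derivative (1,0)) (at t)"
    by (auto intro!: derivative_eq_intros)
  have "(((\<lambda>(s,y). F s y) \<circ> (\<lambda>h. (h, x))) has_vector_derivative F' (1,0)) (at t)"
    by (rule vector_derivative_diff_chain_within[OF c]) (use assms has_derivative_at_withinI in auto)
  then show ?thesis unfolding pt_def by (simp add: o_def vector_derivative_at)
qed

lemma linear_pair0: fixes F' :: "real \<times> 'a::real_vector \<Rightarrow> 'b::real_vector" shows "linear F' \<Longrightarrow> linear (\<lambda>u. F' (0::real, u))"
  by (rule linear_compose[of "\<lambda>u. (0::real,u)" F', unfolded o_def]) (auto intro: linearI)

lemma grad_pair:
  fixes F :: "real \<Rightarrow> real^2 \<Rightarrow> real"
  assumes "((\<lambda>(s,y). F s y) has_derivative F') (at (t,x))"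
  shows "grad (F t) x \<bullet> u = F' (0,u)"
proof -
  have lin: "linear (\<lambda>u. F' (0::real, u))"
    using linear_pair0 has_derivative_linear[OF assms] by blast
  have "grad (F t) x \<bullet> u = (\<Sum>i\<in>UNIV. F' (0, axis i 1) * u $ i)"
    unfolding grad_def inner_vec_def dirD_pair[OF assms] by simp
  also have "\<dots> = F' (0,u)"
    using lin_expand[OF lin, of u] by (simp add: mult.commute)
  finally show ?thesis .
qed

lemma gradT_pair:
  fixes F :: "real \<Rightarrow> real^2 \<Rightarrow> real^2"
  assumes "((\<lambda>(s,y). F s y) has_derivative F') (at (t,x))"
  shows "gradT (F t) x Mv \<bullet> u = Mv \<bullet> F' (0,u)"
proof -
  have lin: "linear (\<lambda>u. F' (0::real, u))"
    using linear_pair0 has_derivative_linear[OF assms] by blast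
  have "gradT (F t) x Mv \<bullet> u = (\<Sum>i\<in>UNIV. (Mv \<bullet> F' (0, axis i 1)) * u $ i)"
    unfolding gradT_def inner_vec_def[of _ u] dirD_pair[OF assms] by simp
  also have "\<dots> = Mv \<bullet> (\<Sum>i\<in>UNIV. u $ i *\<^sub>R F' (0, axis i 1))"
    by (simp add: inner_sum_right mult.commute)
  also have "\<dots> = Mv \<bullet> F' (0,u)"
    using lin_expand[OF lin, of u] by simp
  finally show ?thesis .
qed

lemma dirD_at:
  assumes "(F has_derivative F') (at x)"
  shows "dirD F x u = F' u"
proof -
  have c: "((\<lambda>h. x + h *\<^sub>R u) has_vector_derivative u) (at 0)"
    by (auto intro!: derivative_eq_intros)
  have "((F \<circ> (\<lambda>h. x + h *\<^sub>R u)) has_vector_derivative F' u) (at 0)"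
    by (rule vector_derivative_diff_chain_within[OF c]) (use assms has_derivative_at_withinI in auto)
  then show ?thesis unfolding dirD_def by (simp add: o_def vector_derivative_at)
qed



lemma dL_dv_eq:
  "dL_dv \<sigma> Fr \<rho>ref vv zt gz z Dd r pp = (Dd * r) *\<^sub>R (vv + (\<sigma>^2 * (zt + vv \<bullet> gz)) *\<^sub>R gz)"
proof -
  have d: "((\<lambda>u. Lden \<sigma> Fr \<rho>ref u zt gz z Dd r pp) has_derivative
     (\<lambda>h. (1/2 * (vv \<bullet> h + h \<bullet> vv + \<sigma>^2 * (2 * (zt + vv \<bullet> gz) * (h \<bullet> gz)))) * Dd * r)) (at vv)"
    unfolding Lden_def by (auto intro!: derivative_eq_intros simp: power2_eq_square algebra_simps)
  show ?thesis
    unfolding dL_dv_def dirD_at[OF d]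
    by (simp add: vec_eq_iff inner_axis inner_commute inner_axis' algebra_simps)
qed

lemma dL_dD_eq:
  "dL_dD \<sigma> Fr \<rho>ref vv zt gz z Dd r pp =
     (1/2 * (vv \<bullet> vv + \<sigma>^2 * (zt + vv \<bullet> gz)^2) - \<rho>ref / r * z^2 / (2 * Fr^2)) * r - pp"
proof -
  have "((\<lambda>d. Lden \<sigma> Fr \<rho>ref vv zt gz z d r pp) has_field_derivative
     (1/2 * (vv \<bullet> vv + \<sigma>^2 * (zt + vv \<bullet> gz)^2) - \<rho>ref / r * z^2 / (2 * Fr^2)) * r - pp) (at Dd)"
    unfolding Lden_def by (auto intro!: derivative_eq_intros)
  then show ?thesis unfolding dL_dD_def by (rule DERIV_imp_deriv)
qed

lemma dL_drho_eq:
  assumes "r \<noteq> 0"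
  shows "dL_drho \<sigma> Fr \<rho>ref vv zt gz z Dd r pp = 1/2 * (vv \<bullet> vv + \<sigma>^2 * (zt + vv \<bullet> gz)^2) * Dd"
proof -
  have "((\<lambda>s. Lden \<sigma> Fr \<rho>ref vv zt gz z Dd s pp) has_field_derivative
     1/2 * (vv \<bullet> vv + \<sigma>^2 * (zt + vv \<bullet> gz)^2) * Dd) (at r)"
  proof (rule has_field_derivative_transform_within_open[where S="-{0}"])
    show "((\<lambda>s. (1/2 * (vv \<bullet> vv + \<sigma>^2 * (zt + vv \<bullet> gz)^2)) * Dd * s - \<rho>ref * z^2 / (2 * Fr^2) * Dd - pp * (Dd - 1)) has_field_derivative
     1/2 * (vv \<bullet> vv + \<sigma>^2 * (zt + vv \<bullet> gz)^2) * Dd) (at r)"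
      by (auto intro!: derivative_eq_intros)
    show "open (- {0::real})" by auto
    show "r \<in> - {0}" using assms by auto
    fix s :: real assume "s \<in> - {0}"
    then show "(1/2 * (vv \<bullet> vv + \<sigma>^2 * (zt + vv \<bullet> gz)^2)) * Dd * s - \<rho>ref * z^2 / (2 * Fr^2) * Dd - pp * (Dd - 1)
       = Lden \<sigma> Fr \<rho>ref vv zt gz z Dd s pp"
      unfolding Lden_def by (simp add: field_simps)
  qed
  then show ?thesis unfolding dL_drho_def by (rule DERIV_imp_deriv)
qed



lemma mixed_partials:
  fixes c A B P :: "real \<Rightarrow> real \<Rightarrow> 'a::euclidean_space" and Q :: "real \<Rightarrow> 'a"
  assumes T: "open T" "\<tau> \<in> T"
    and A: "\<And>t s. t \<in> T \<Longrightarrow> ((\<lambda>r. c t r) has_vector_derivative A t s) (at s)"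
    and Bd: "\<And>t s. t \<in> T \<Longrightarrow> ((\<lambda>t. c t s) has_vector_derivative B t s) (at t)"
    and P: "\<And>t s. t \<in> T \<Longrightarrow> ((\<lambda>t. A t s) has_vector_derivative P t s) (at t)"
    and Pc: "continuous_on (T \<times> UNIV) (\<lambda>(t,s). P t s)"
    and Ac: "continuous_on (T \<times> UNIV) (\<lambda>(t,s). A t s)"
    and Q: "\<And>s. ((\<lambda>r. B \<tau> r) has_vector_derivative Q s) (at s)"
    and Qc: "continuous_on UNIV Q"
  shows "P \<tau> s = Q s"
proof -
  obtain e where e: "e > 0" "ball \<tau> e \<subseteq> T" using T openE by blast
  define U where "U = ball \<tau> e"
  have U: "open U" "convex U" "\<tau> \<in> U" "U \<subseteq> T" using e unfolding U_def by auto
  define a where "a = s - 1"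
  define b where "b = s + 1"
  have Acont: "continuous_on S (A t)" if "t \<in> T" for t S
  proof -
    have "continuous_on UNIV (\<lambda>r. (\<lambda>(t,s). A t s) (t, r))"
      by (rule continuous_on_compose2[OF Ac]) (use that in \<open>auto intro!: continuous_intros\<close>)
    then show ?thesis by (auto intro: continuous_on_subset)
  qed
  have Pcont: "continuous_on S (P t)" if "t \<in> T" for t S
  proof -
    have "continuous_on UNIV (\<lambda>r. (\<lambda>(t,s). P t s) (t, r))"
      by (rule continuous_on_compose2[OF Pc]) (use that in \<open>auto intro!: continuous_intros\<close>)
    then show ?thesis by (auto intro: continuous_on_subset)
  qed
  have key: "integral {a..x} (\<lambda>r. P \<tau> r - Q r) = 0" if x: "x \<in> {a..b}" for x
  proof -
    have "((\<lambda>t. integral (cbox a x) (A t)) has_vector_derivative integral (cbox a x) (P \<tau>)) (at \<tau> within U)"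
    proof (rule leibniz_rule_vector_derivative)
      fix t r assume "t \<in> U" "r \<in> cbox a x"
      then show "((\<lambda>t. A t r) has_vector_derivative P t r) (at t within U)"
        using P U(4) has_vector_derivative_at_within by blast
    next
      fix t assume "t \<in> U"
      then show "A t integrable_on cbox a x"
        using Acont U(4) by (metis integrable_continuous subsetD)
    next
      show "continuous_on (U \<times> cbox a x) (\<lambda>(t, s). P t s)"
        by (rule continuous_on_subset[OF Pc]) (use U(4) in auto)
    qed (use U in auto)
    then have L: "((\<lambda>t. integral {a..x} (A t)) has_vector_derivative integral {a..x} (P \<tau>)) (at \<tau>)"
      using U at_within_open by fastforce
    have ax: "a \<le> x" using x by auto
    have ftc: "integral {a..x} (A t) = c t x - c t a" if "t \<in> T" for t
      by (rule integral_unique, rule fundamental_theorem_of_calculus[OF ax])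
         (use A that has_vector_derivative_at_within in blast)
    have L2: "((\<lambda>t. c t x - c t a) has_vector_derivative integral {a..x} (P \<tau>)) (at \<tau>)"
      by (rule has_vector_derivative_transform_within_open[OF L T]) (use ftc in auto)
    have L3: "((\<lambda>t. c t x - c t a) has_vector_derivative B \<tau> x - B \<tau> a) (at \<tau>)"
      using Bd[OF T(2)] by (auto intro!: derivative_intros)
    have e1: "integral {a..x} (P \<tau>) = B \<tau> x - B \<tau> a"
      using vector_derivative_unique_at[OF L2 L3] .
    have e2: "integral {a..x} Q = B \<tau> x - B \<tau> a"
      by (rule integral_unique, rule fundamental_theorem_of_calculus[OF ax])
         (use Q has_vector_derivative_at_within in blast)
    have "integral {a..x} (\<lambda>r. P \<tau> r - Q r) = integral {a..x} (P \<tau>) - integral {a..x} Q"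
      by (rule integral_diff) (use Pcont[OF T(2)] Qc in \<open>auto intro!: integrable_continuous_real intro: continuous_on_subset\<close>)
    then show ?thesis using e1 e2 by simp
  qed
  have gc: "continuous_on {a..b} (\<lambda>r. P \<tau> r - Q r)"
    using Pcont[OF T(2)] Qc by (auto intro!: continuous_intros intro: continuous_on_subset)
  have sin: "s \<in> {a..b}" unfolding a_def b_def by auto
  have D1: "((\<lambda>u. integral {a..u} (\<lambda>r. P \<tau> r - Q r)) has_vector_derivative (P \<tau> s - Q s)) (at s within {a..b})"
    using integral_has_vector_derivative[OF gc sin] .
  have "interior {a..b} = {a<..<b}" by simp
  then have "s \<in> interior {a..b}" unfolding a_def b_def by auto
  then have D2: "((\<lambda>u. integral {a..u} (\<lambda>r. P \<tau> r - Q r)) has_vector_derivative (P \<tau> s - Q s)) (at s)"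
    using D1 at_within_interior by metis
  have D3: "((\<lambda>u. 0) has_vector_derivative (P \<tau> s - Q s)) (at s)"
    by (rule has_vector_derivative_transform_within_open[OF D2, of "{a<..<b}"])
       (use key in \<open>auto simp: a_def b_def\<close>)
  have D4: "((\<lambda>u. 0::'a) has_vector_derivative 0) (at s)" by (rule derivative_intros)
  show ?thesis using vector_derivative_unique_at[OF D3 D4] by simp
qed



lemma curve_chain:
  assumes "(F has_derivative F') (at (g x))" "(g has_vector_derivative g') (at x)"
  shows "((\<lambda>y. F (g y)) has_vector_derivative F' g') (at x)"
  using vector_derivative_diff_chain_within[OF assms(2), of F F'] assms(1)
  by (simp add: o_def has_derivative_at_withinI)

lemma vd_inner:
  assumes "(f has_vector_derivative f') (at x)" "(g has_vector_derivative g') (at x)"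
  shows "((\<lambda>x. f x \<bullet> g x) has_field_derivative (f x \<bullet> g' + f' \<bullet> g x)) (at x)"
proof -
  have "((\<lambda>x. f x \<bullet> g x) has_derivative (\<lambda>h. f x \<bullet> (h *\<^sub>R g') + (h *\<^sub>R f') \<bullet> g x)) (at x)"
    using bounded_bilinear.FDERIV[OF bounded_bilinear_inner assms[unfolded has_vector_derivative_def]] .
  then show ?thesis unfolding has_field_derivative_def
    by (rule has_derivative_eq_rhs) (auto simp: algebra_simps)
qed

lemma cont_deriv_comp:
  fixes F' :: "real \<times> (real^2) \<Rightarrow> real \<times> (real^2) \<Rightarrow> 'b::real_normed_vector"
  assumes F: "C1d S F F'" and g: "continuous_on X g" "g ` X \<subseteq> S"
    and h: "continuous_on X h" and a: "continuous_on X a"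
  shows "continuous_on X (\<lambda>w. F' (g w) (a w, h w))"
proof -
  have eq: "F' (g w) (a w, h w) = a w *\<^sub>R F' (g w) (1,0) + (\<Sum>i\<in>UNIV. (h w $ i) *\<^sub>R F' (g w) (0, axis i 1))"
    if "w \<in> X" for w
  proof -
    have lin: "linear (F' (g w))"
      using g(2) that C1d_D[OF F] has_derivative_linear by blast
    have pe: "(a w, h w) = a w *\<^sub>R (1::real, 0::real^2) + (0, h w)" by simp
    have "F' (g w) (a w, h w) = F' (g w) (a w *\<^sub>R (1,0)) + F' (g w) (0, h w)"
      by (subst pe, rule linear_add[OF lin])
    also have "F' (g w) (a w *\<^sub>R (1,0)) = a w *\<^sub>R F' (g w) (1,0)"
      by (rule linear_cmul[OF lin])
    also have "F' (g w) (0, h w) = (\<Sum>i\<in>UNIV. (h w $ i) *\<^sub>R F' (g w) (0, axis i 1))"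
      using lin_expand[OF linear_pair0[OF lin]] .
    finally show ?thesis .
  qed
  have c: "continuous_on X (\<lambda>w. F' (g w) u)" for u
    by (rule continuous_on_compose2[OF C1d_contD[OF F] g])
  have "continuous_on X (\<lambda>w. a w *\<^sub>R F' (g w) (1,0) + (\<Sum>i\<in>UNIV. (h w $ i) *\<^sub>R F' (g w) (0, axis i 1)))"
    by (intro continuous_intros c a h)
  then show ?thesis using eq continuous_on_cong by (metis (no_types, lifting))
qed



theorem mainTheorem1:
  fixes \<sigma> Fr \<rho>ref :: real
    and T :: "real set"
    and v :: "real \<Rightarrow> real^2 \<Rightarrow> real^2"
    and \<zeta> D \<rho> p :: "real \<Rightarrow> real^2 \<Rightarrow> real"
    and c :: "real \<Rightarrow> real \<Rightarrow> real^2"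
  assumes T_open: "open T"
    and Fr_nz: "Fr \<noteq> 0"
    and rho_pos: "\<And>t x. t \<in> T \<Longrightarrow> \<rho> t x > 0"
    and v_C1: "C1_on (T \<times> UNIV) (\<lambda>(t, x). v t x)"
    and zeta_C1: "C1_on (T \<times> UNIV) (\<lambda>(t, x). \<zeta> t x)"
    and zeta_t_C1: "C1_on (T \<times> UNIV) (\<lambda>(t, x). pt \<zeta> t x)"
    and zeta_x_C1: "C1_on (T \<times> UNIV) (\<lambda>(t, x). grad (\<zeta> t) x)"
    and D_C1: "C1_on (T \<times> UNIV) (\<lambda>(t, x). D t x)"
    and rho_C1: "C1_on (T \<times> UNIV) (\<lambda>(t, x). \<rho> t x)"
    and p_C1: "C1_on (T \<times> UNIV) (\<lambda>(t, x). p t x)"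
    \<comment> \<open>advection of D and rho, and the constraint D = 1 (from the multiplier p)\<close>
    and D_adv: "\<And>t x. t \<in> T \<Longrightarrow> pt D t x + div2 (\<lambda>y. D t y *\<^sub>R v t y) x = 0"
    and rho_adv: "\<And>t x. t \<in> T \<Longrightarrow> pt \<rho> t x + v t x \<bullet> grad (\<rho> t) x = 0"
    and D_one: "\<And>t x. t \<in> T \<Longrightarrow> D t x = 1"
    \<comment> \<open>Euler-Poincare equation for ell(v, zeta, D, rho):
        (d/dt + ad*_v) dl/dv = dl/dD \<diamond> D + dl/drho \<diamond> rho\<close>
    and EP: "\<And>t x. t \<in> T \<Longrightarrow>
      (let M = (\<lambda>s y. dL_dv \<sigma> Fr \<rho>ref (v s y) (pt \<zeta> s y) (grad (\<zeta> s) y) (\<zeta> s y) (D s y) (\<rho> s y) (p s y));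
           PD = (\<lambda>y. dL_dD \<sigma> Fr \<rho>ref (v t y) (pt \<zeta> t y) (grad (\<zeta> t) y) (\<zeta> t y) (D t y) (\<rho> t y) (p t y));
           PR = dL_drho \<sigma> Fr \<rho>ref (v t x) (pt \<zeta> t x) (grad (\<zeta> t) x) (\<zeta> t x) (D t x) (\<rho> t x) (p t x)
       in pt M t x + dirD (M t) x (v t x) + gradT (v t) x (M t x) + div2 (v t) x *\<^sub>R M t x
          = D t x *\<^sub>R grad PD x - PR *\<^sub>R grad (\<rho> t) x)"
    \<comment> \<open>the closed loop c(v) moving with the horizontal flow\<close>
    and c_C1: "C1_on (T \<times> UNIV) (\<lambda>(t, s). c t s)"
    and c_s_C1: "C1_on (T \<times> UNIV) (\<lambda>(t, s). vector_derivative (c t) (at s))"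
    and c_closed: "\<And>t. t \<in> T \<Longrightarrow> c t 0 = c t 1"
    and c_moves: "\<And>t s. t \<in> T \<Longrightarrow> (pt c t s) = v t (c t s)"
  shows "\<And>t. t \<in> T \<Longrightarrow>
    ((\<lambda>\<tau>. integral {0..1} (\<lambda>s.
        v \<tau> (c \<tau> s) \<bullet> vector_derivative (c \<tau>) (at s)
        + \<sigma>^2 * (pt \<zeta> \<tau> (c \<tau> s) + v \<tau> (c \<tau> s) \<bullet> grad (\<zeta> \<tau>) (c \<tau> s))
            * vector_derivative (\<lambda>r. \<zeta> \<tau> (c \<tau> r)) (at s)))
     has_real_derivative
       - integral {0..1} (\<lambda>s. (1 / \<rho> t (c t s)) *
            vector_derivative (\<lambda>r. p t (c t r) + \<rho>ref * (\<zeta> t (c t r))^2 / (2 * Fr^2)) (at s)))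
    (at t)"
proof -
  fix t0 assume t0: "t0 \<in> T"
  define Z where "Z = T \<times> (UNIV :: (real^2) set)"
  have Zo: "open Z" unfolding Z_def using T_open by (simp add: open_Times)
  define V where "V = (\<lambda>(t::real, x::real^2). v t x)"
  define Zt where "Zt = (\<lambda>(t::real, x::real^2). pt \<zeta> t x)"
  define Gz where "Gz = (\<lambda>(t::real, x::real^2). grad (\<zeta> t) x)"
  define Ze where "Ze = (\<lambda>(t::real, x::real^2). \<zeta> t x)"
  define R where "R = (\<lambda>(t::real, x::real^2). \<rho> t x)"
  define Pp where "Pp = (\<lambda>(t::real, x::real^2). p t x)"
  obtain V' where V': "C1d Z V V'" using C1d_of_C1_on[OF v_C1] unfolding V_def Z_def by blast
  obtain Zt' where Zt': "C1d Z Zt Zt'" using C1d_of_C1_on[OF zeta_t_C1] unfolding Zt_def Z_def by blast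
  obtain Gz' where Gz': "C1d Z Gz Gz'" using C1d_of_C1_on[OF zeta_x_C1] unfolding Gz_def Z_def by blast
  obtain Ze' where Ze': "C1d Z Ze Ze'" using C1d_of_C1_on[OF zeta_C1] unfolding Ze_def Z_def by blast
  obtain R' where R': "C1d Z R R'" using C1d_of_C1_on[OF rho_C1] unfolding R_def Z_def by blast
  obtain Pp' where Pp': "C1d Z Pp Pp'" using C1d_of_C1_on[OF p_C1] unfolding Pp_def Z_def by blast
  define W where "W = (\<lambda>z. Zt z + V z \<bullet> Gz z)"
  obtain W' where W': "C1d Z W W'" using C1d_add[OF Zt' C1d_inner[OF V' Gz']] unfolding W_def by blast
  define m where "m = (\<lambda>z. V z + (\<sigma>^2 * W z) *\<^sub>R Gz z)"
  obtain m' where m': "C1d Z m m'"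
    using C1d_add[OF V' C1d_scaleR[OF C1d_cmult[OF W'] Gz']] unfolding m_def by blast
  define K where "K = (\<lambda>z. 1/2 * (V z \<bullet> V z + \<sigma>^2 * (W z * W z)))"
  obtain K' where K': "C1d Z K K'"
    using C1d_cmult[OF C1d_add[OF C1d_inner[OF V' V'] C1d_cmult[OF C1d_mult[OF W' W']]]] unfolding K_def by blast
  define Pt where "Pt = (\<lambda>z. Pp z + (\<rho>ref / (2*Fr^2)) * (Ze z * Ze z))"
  obtain Pt' where Pt': "C1d Z Pt Pt'"
    using C1d_add[OF Pp' C1d_cmult[OF C1d_mult[OF Ze' Ze']]] unfolding Pt_def by blast
  define Mh where "Mh = (\<lambda>z. R z *\<^sub>R m z)"
  have Mh': "C1d Z Mh (\<lambda>z h. R z *\<^sub>R m' z h + R' z h *\<^sub>R m z)"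
    unfolding Mh_def by (rule C1d_scaleR[OF R' m'])
  define PDf where "PDf = (\<lambda>z. K z * R z - Pt z)"
  have PDf': "C1d Z PDf (\<lambda>z h. (K z * R' z h + K' z h * R z) - Pt' z h)"
    unfolding PDf_def by (rule C1d_diff[OF C1d_mult[OF K' R'] Pt'])

  have EPid: "m' (\<tau>,x) (1, v \<tau> x) \<bullet> C + m (\<tau>,x) \<bullet> V' (\<tau>,x) (0,C)
      = K' (\<tau>,x) (0,C) - Pt' (\<tau>,x) (0,C) / R (\<tau>,x)"
    if h\<tau>: "\<tau> \<in> T" for \<tau> x C
  proof -
    let ?z = "(\<tau>,x)"
    have zZ: "?z \<in> Z" using h\<tau> by (simp add: Z_def)
    have Rpos: "R ?z > 0" using rho_pos[OF h\<tau>] by (simp add: R_def)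
    define Mf where "Mf = (\<lambda>s y. dL_dv \<sigma> Fr \<rho>ref (v s y) (pt \<zeta> s y) (grad (\<zeta> s) y) (\<zeta> s y) (D s y) (\<rho> s y) (p s y))"
    define PD where "PD = (\<lambda>y. dL_dD \<sigma> Fr \<rho>ref (v \<tau> y) (pt \<zeta> \<tau> y) (grad (\<zeta> \<tau>) y) (\<zeta> \<tau> y) (D \<tau> y) (\<rho> \<tau> y) (p \<tau> y))"
    define PR where "PR = dL_drho \<sigma> Fr \<rho>ref (v \<tau> x) (pt \<zeta> \<tau> x) (grad (\<zeta> \<tau>) x) (\<zeta> \<tau> x) (D \<tau> x) (\<rho> \<tau> x) (p \<tau> x)"
    have EPx: "pt Mf \<tau> x + dirD (Mf \<tau>) x (v \<tau> x) + gradT (v \<tau>) x (Mf \<tau> x) + div2 (v \<tau>) x *\<^sub>R Mf \<tau> x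
        = D \<tau> x *\<^sub>R grad PD x - PR *\<^sub>R grad (\<rho> \<tau>) x"
      using EP[OF h\<tau>, of x] unfolding Let_def Mf_def PD_def PR_def .
    have MfMh: "Mh w = (\<lambda>(s,y). Mf s y) w" if "w \<in> Z" for w
      using that D_one
      by (cases w) (auto simp: Mf_def Mh_def Z_def dL_dv_eq m_def W_def V_def Zt_def Gz_def R_def)
    have dMf: "((\<lambda>(s,y). Mf s y) has_derivative (\<lambda>h. R ?z *\<^sub>R m' ?z h + R' ?z h *\<^sub>R m ?z)) (at ?z)"
      by (rule has_derivative_transform_within_open[OF C1d_D[OF Mh' zZ] Zo zZ]) (use MfMh in auto)
    have e1: "pt Mf \<tau> x = R ?z *\<^sub>R m' ?z (1,0) + R' ?z (1,0) *\<^sub>R m ?z"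
      using pt_pair[OF dMf] by simp
    have e2: "dirD (Mf \<tau>) x (v \<tau> x) = R ?z *\<^sub>R m' ?z (0, v \<tau> x) + R' ?z (0, v \<tau> x) *\<^sub>R m ?z"
      using dirD_pair[OF dMf] by simp
    have e3: "Mf \<tau> x = R ?z *\<^sub>R m ?z" using MfMh[OF zZ] by (simp add: Mh_def)
    have dV: "((\<lambda>(s,y). v s y) has_derivative V' ?z) (at ?z)" using C1d_D[OF V' zZ] unfolding V_def .
    have e4: "gradT (v \<tau>) x (R ?z *\<^sub>R m ?z) \<bullet> C = (R ?z *\<^sub>R m ?z) \<bullet> V' ?z (0,C)"
      by (rule gradT_pair[OF dV])
    have e5: "div2 (v \<tau>) x = 0"
    proof -
      have "((\<lambda>s. D s x) has_vector_derivative 0) (at \<tau>)"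
        by (rule has_vector_derivative_transform_within_open[of "\<lambda>s. 1" 0 \<tau> T])
           (use T_open h\<tau> D_one in \<open>auto intro: derivative_intros\<close>)
      then have "pt D \<tau> x = 0" unfolding pt_def by (rule vector_derivative_at)
      moreover have "(\<lambda>y. D \<tau> y *\<^sub>R v \<tau> y) = v \<tau>" using D_one[OF h\<tau>] by auto
      ultimately show ?thesis using D_adv[OF h\<tau>, of x] by simp
    qed
    have PDeq: "PD = (\<lambda>y. PDf (\<tau>,y))"
    proof
      fix y
      have "\<rho> \<tau> y \<noteq> 0" using rho_pos[OF h\<tau>, of y] by simp
      then show "PD y = PDf (\<tau>,y)"
        using D_one[OF h\<tau>] Fr_nz
        by (simp add: PD_def PDf_def dL_dD_eq K_def Pt_def W_def V_def Zt_def Gz_def R_def Pp_def Ze_def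
            power2_eq_square field_simps)
    qed
    have dPD: "((\<lambda>(s,y). PDf (s,y)) has_derivative (\<lambda>h. (K ?z * R' ?z h + K' ?z h * R ?z) - Pt' ?z h)) (at ?z)"
      using C1d_D[OF PDf' zZ] by simp
    have e6: "grad PD x \<bullet> C = (K ?z * R' ?z (0,C) + K' ?z (0,C) * R ?z) - Pt' ?z (0,C)"
      using grad_pair[OF dPD] unfolding PDeq by simp
    have e7: "PR = K ?z" using rho_pos[OF h\<tau>, of x] D_one[OF h\<tau>]
      by (simp add: PR_def dL_drho_eq K_def W_def V_def Zt_def Gz_def power2_eq_square)
    have dR: "((\<lambda>(s,y). \<rho> s y) has_derivative R' ?z) (at ?z)" using C1d_D[OF R' zZ] unfolding R_def .
    have e8: "grad (\<rho> \<tau>) x \<bullet> C = R' ?z (0,C)" by (rule grad_pair[OF dR])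
    have e9: "R' ?z (1,0) + R' ?z (0, v \<tau> x) = 0"
      using rho_adv[OF h\<tau>, of x] pt_pair[OF dR] grad_pair[OF dR, of "v \<tau> x"] by (simp add: inner_commute)
    have e10: "D \<tau> x = 1" using D_one[OF h\<tau>] .
    have linm: "linear (m' ?z)" using has_derivative_linear[OF C1d_D[OF m' zZ]] .
    have e11: "m' ?z (1, v \<tau> x) = m' ?z (1,0) + m' ?z (0, v \<tau> x)"
      using linear_add[OF linm, of "(1,0)" "(0, v \<tau> x)"] by simp
    have "(pt Mf \<tau> x + dirD (Mf \<tau>) x (v \<tau> x) + gradT (v \<tau>) x (Mf \<tau> x) + div2 (v \<tau>) x *\<^sub>R Mf \<tau> x) \<bullet> C
        = (D \<tau> x *\<^sub>R grad PD x - PR *\<^sub>R grad (\<rho> \<tau>) x) \<bullet> C"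
      using EPx by simp
    then have EQ: "R ?z * (m' ?z (1,0) \<bullet> C) + R' ?z (1,0) * (m ?z \<bullet> C)
        + (R ?z * (m' ?z (0, v \<tau> x) \<bullet> C) + R' ?z (0, v \<tau> x) * (m ?z \<bullet> C))
        + R ?z * (m ?z \<bullet> V' ?z (0,C))
        = (K ?z * R' ?z (0,C) + K' ?z (0,C) * R ?z) - Pt' ?z (0,C) - K ?z * R' ?z (0,C)"
      unfolding e3 inner_add_left inner_diff_left e1 e2 e4 e5 e6 e7 e8 e10 by (simp add: e6 e8)
    have "R ?z * (m' ?z (1, v \<tau> x) \<bullet> C + m ?z \<bullet> V' ?z (0,C)) = R ?z * K' ?z (0,C) - Pt' ?z (0,C)"
    proof -
      have "(R' ?z (1,0) + R' ?z (0, v \<tau> x)) * (m ?z \<bullet> C) = 0" using e9 by simp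
      then show ?thesis using EQ unfolding e11 inner_add_left by (simp add: algebra_simps)
    qed
    then show ?thesis using Rpos by (simp add: field_simps)
  qed
  define cc where "cc = (\<lambda>(t::real, s::real). c t s)"
  define Zc where "Zc = T \<times> (UNIV :: real set)"
  have Zco: "open Zc" unfolding Zc_def using T_open by (simp add: open_Times)
  obtain c' where c': "C1d Zc cc c'" using C1d_of_C1_on[OF c_C1] unfolding cc_def Zc_def by blast
  define Cf where "Cf = (\<lambda>t s. vector_derivative (c t) (at s))"
  define Cs where "Cs = (\<lambda>(t::real, s::real). Cf t s)"
  obtain Cf' where Cf': "C1d Zc Cs Cf'" using C1d_of_C1_on[OF c_s_C1] unfolding Cs_def Cf_def Zc_def by blast
  have ccc: "continuous_on Zc cc" using C1d_cont[OF c'] .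
  have Csc: "continuous_on Zc Cs" using C1d_cont[OF Cf'] .
  define g where "g = (\<lambda>w::real\<times>real. (fst w, cc w))"
  have gc: "continuous_on Zc g" unfolding g_def by (intro continuous_intros ccc)
  have gZ: "g ` Zc \<subseteq> Z" by (auto simp: g_def Zc_def Z_def)
  have ccT: "continuous_on UNIV (c \<tau>)" if "\<tau> \<in> T" for \<tau>
  proof -
    have "continuous_on UNIV (\<lambda>s. cc (\<tau>, s))"
      by (rule continuous_on_compose2[OF ccc]) (use that in \<open>auto simp: Zc_def intro!: continuous_intros\<close>)
    then show ?thesis by (simp add: cc_def)
  qed
  have CfT: "continuous_on UNIV (Cf \<tau>)" if "\<tau> \<in> T" for \<tau>
  proof -
    have "continuous_on UNIV (\<lambda>s. Cs (\<tau>, s))"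
      by (rule continuous_on_compose2[OF Csc]) (use that in \<open>auto simp: Zc_def intro!: continuous_intros\<close>)
    then show ?thesis by (simp add: Cs_def)
  qed
  have hcs: "((\<lambda>r. c \<tau> r) has_vector_derivative Cf \<tau> s) (at s)" if "\<tau> \<in> T" for \<tau> s
  proof -
    have "((\<lambda>r. cc (\<tau>, r)) has_vector_derivative c' (\<tau>,s) (0,1)) (at s)"
      by (rule curve_chain[of cc "c' (\<tau>,s)" "\<lambda>r. (\<tau>, r)" s "(0,1)", simplified])
         (use that C1d_D[OF c'] in \<open>auto simp: Zc_def intro!: derivative_eq_intros\<close>)
    then have "((\<lambda>r. c \<tau> r) has_vector_derivative c' (\<tau>,s) (0,1)) (at s)" by (simp add: cc_def)
    moreover then have "Cf \<tau> s = c' (\<tau>,s) (0,1)" unfolding Cf_def by (simp add: vector_derivative_at)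
    ultimately show ?thesis by simp
  qed
  have hct: "((\<lambda>t. c t s) has_vector_derivative v \<tau> (c \<tau> s)) (at \<tau>)" if "\<tau> \<in> T" for \<tau> s
  proof -
    have "((\<lambda>t. cc (t, s)) has_vector_derivative c' (\<tau>,s) (1,0)) (at \<tau>)"
      by (rule curve_chain[of cc "c' (\<tau>,s)" "\<lambda>t. (t, s)" \<tau> "(1,0)", simplified])
         (use that C1d_D[OF c'] in \<open>auto simp: Zc_def intro!: derivative_eq_intros\<close>)
    then have "((\<lambda>t. c t s) has_vector_derivative c' (\<tau>,s) (1,0)) (at \<tau>)" by (simp add: cc_def)
    moreover then have "pt c \<tau> s = c' (\<tau>,s) (1,0)" unfolding pt_def by (simp add: vector_derivative_at)
    ultimately show ?thesis using c_moves[OF that, of s] by simp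
  qed
  have hCt: "((\<lambda>t. Cf t s) has_vector_derivative Cf' (\<tau>,s) (1,0)) (at \<tau>)" if "\<tau> \<in> T" for \<tau> s
  proof -
    have "((\<lambda>t. Cs (t, s)) has_vector_derivative Cf' (\<tau>,s) (1,0)) (at \<tau>)"
      by (rule curve_chain[of Cs "Cf' (\<tau>,s)" "\<lambda>t. (t, s)" \<tau> "(1,0)", simplified])
         (use that C1d_D[OF Cf'] in \<open>auto simp: Zc_def intro!: derivative_eq_intros\<close>)
    then show ?thesis by (simp add: Cs_def)
  qed
  have curve_s: "((\<lambda>r. F (\<tau>, c \<tau> r)) has_vector_derivative F' (\<tau>, c \<tau> s) (0, Cf \<tau> s)) (at s)"
    if "\<tau> \<in> T" "C1d Z F F'" for \<tau> s and F :: "real \<times> (real^2) \<Rightarrow> 'b::real_normed_vector" and F'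
    by (rule curve_chain[of F "F' (\<tau>, c \<tau> s)" "\<lambda>r. (\<tau>, c \<tau> r)" s "(0, Cf \<tau> s)", simplified])
       (use that C1d_D[OF that(2)] hcs[OF that(1)] in \<open>auto simp: Z_def intro!: derivative_eq_intros\<close>)
  have curve_t: "((\<lambda>t. F (t, c t s)) has_vector_derivative F' (\<tau>, c \<tau> s) (1, v \<tau> (c \<tau> s))) (at \<tau>)"
    if "\<tau> \<in> T" "C1d Z F F'" for \<tau> s and F :: "real \<times> (real^2) \<Rightarrow> 'b::real_normed_vector" and F'
    by (rule curve_chain[of F "F' (\<tau>, c \<tau> s)" "\<lambda>t. (t, c t s)" \<tau> "(1, v \<tau> (c \<tau> s))", simplified])
       (use that C1d_D[OF that(2)] hct[OF that(1)] in \<open>auto simp: Z_def intro!: derivative_eq_intros\<close>)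
  have clair: "Cf' (\<tau>,s) (1,0) = V' (\<tau>, c \<tau> s) (0, Cf \<tau> s)" if h\<tau>: "\<tau> \<in> T" for \<tau> s
  proof (rule mixed_partials[where c=c and A=Cf and B="\<lambda>t s. v t (c t s)" and P="\<lambda>t s. Cf' (t,s) (1,0)"
        and Q="\<lambda>s. V' (\<tau>, c \<tau> s) (0, Cf \<tau> s)" and T=T])
    show "open T" "\<tau> \<in> T" using T_open h\<tau> by auto
    show "((\<lambda>r. c t r) has_vector_derivative Cf t s) (at s)" if "t \<in> T" for t s using hcs that .
    show "((\<lambda>t. c t s) has_vector_derivative v t (c t s)) (at t)" if "t \<in> T" for t s using hct that .
    show "((\<lambda>t. Cf t s) has_vector_derivative Cf' (t,s) (1,0)) (at t)" if "t \<in> T" for t s using hCt that .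
    have "continuous_on Zc (\<lambda>z. Cf' z (1,0))" using C1d_contD[OF Cf'] .
    then show "continuous_on (T \<times> UNIV) (\<lambda>(t, s). Cf' (t, s) (1, 0))"
      unfolding Zc_def by (simp add: case_prod_beta')
    show "continuous_on (T \<times> UNIV) (\<lambda>(t, s). Cf t s)" using Csc unfolding Zc_def Cs_def .
    show "((\<lambda>r. v \<tau> (c \<tau> r)) has_vector_derivative V' (\<tau>, c \<tau> s) (0, Cf \<tau> s)) (at s)" for s
      using curve_s[OF h\<tau> V', of s] by (simp add: V_def)
    show "continuous_on UNIV (\<lambda>s. V' (\<tau>, c \<tau> s) (0, Cf \<tau> s))"
      by (rule cont_deriv_comp[OF V', where a="\<lambda>_. 0"])
         (use h\<tau> ccT[OF h\<tau>] CfT[OF h\<tau>] in \<open>auto simp: Z_def intro!: continuous_intros\<close>)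
  qed
  define I where "I = (\<lambda>\<tau> s. v \<tau> (c \<tau> s) \<bullet> vector_derivative (c \<tau>) (at s)
        + \<sigma>^2 * (pt \<zeta> \<tau> (c \<tau> s) + v \<tau> (c \<tau> s) \<bullet> grad (\<zeta> \<tau>) (c \<tau> s))
            * vector_derivative (\<lambda>r. \<zeta> \<tau> (c \<tau> r)) (at s))"
  define J where "J = (\<lambda>\<tau> s. K' (\<tau>, c \<tau> s) (0, Cf \<tau> s) - Pt' (\<tau>, c \<tau> s) (0, Cf \<tau> s) / R (\<tau>, c \<tau> s))"
  have hI: "I \<tau> s = m (\<tau>, c \<tau> s) \<bullet> Cf \<tau> s" if h\<tau>: "\<tau> \<in> T" for \<tau> s
  proof -
    have "vector_derivative (\<lambda>r. \<zeta> \<tau> (c \<tau> r)) (at s) = Ze' (\<tau>, c \<tau> s) (0, Cf \<tau> s)"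
      using curve_s[OF h\<tau> Ze', of s] by (simp add: Ze_def vector_derivative_at)
    also have "\<dots> = grad (\<zeta> \<tau>) (c \<tau> s) \<bullet> Cf \<tau> s"
    proof -
      have zZ: "(\<tau>, c \<tau> s) \<in> Z" using h\<tau> by (simp add: Z_def)
      have dZe: "((\<lambda>(s,y). \<zeta> s y) has_derivative Ze' (\<tau>, c \<tau> s)) (at (\<tau>, c \<tau> s))"
        using C1d_D[OF Ze' zZ] unfolding Ze_def .
      show ?thesis using grad_pair[OF dZe] by simp
    qed
    finally show ?thesis
      by (simp add: I_def m_def W_def V_def Zt_def Gz_def Cf_def inner_add_left algebra_simps)
  qed
  have hdI: "((\<lambda>\<tau>'. I \<tau>' s) has_real_derivative J \<tau> s) (at \<tau>)" if h\<tau>: "\<tau> \<in> T" for \<tau> s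
  proof -
    have 1: "((\<lambda>t. m (t, c t s)) has_vector_derivative m' (\<tau>, c \<tau> s) (1, v \<tau> (c \<tau> s))) (at \<tau>)"
      using curve_t[OF h\<tau> m'] .
    have 2: "((\<lambda>t. Cf t s) has_vector_derivative V' (\<tau>, c \<tau> s) (0, Cf \<tau> s)) (at \<tau>)"
      using hCt[OF h\<tau>, of s] clair[OF h\<tau>, of s] by simp
    have "((\<lambda>t. m (t, c t s) \<bullet> Cf t s) has_real_derivative J \<tau> s) (at \<tau>)"
      using vd_inner[OF 1 2] EPid[OF h\<tau>, of "c \<tau> s" "Cf \<tau> s"] by (simp add: J_def add.commute)
    then show ?thesis
      by (rule has_field_derivative_transform_within_open[OF _ T_open h\<tau>]) (simp add: hI)
  qed
  obtain e where e: "e > 0" "ball t0 e \<subseteq> T" using T_open t0 openE by blast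
  define U where "U = ball t0 e"
  have U: "open U" "convex U" "t0 \<in> U" "U \<subseteq> T" using e unfolding U_def by auto
  have Jc: "continuous_on Zc (\<lambda>(\<tau>,s). J \<tau> s)"
  proof -
    have a: "continuous_on Zc (\<lambda>w. K' (g w) (0, Cs w))"
      by (rule cont_deriv_comp[OF K' gc gZ Csc]) (intro continuous_intros)
    have b: "continuous_on Zc (\<lambda>w. Pt' (g w) (0, Cs w))"
      by (rule cont_deriv_comp[OF Pt' gc gZ Csc]) (intro continuous_intros)
    have r: "continuous_on Zc (\<lambda>w. R (g w))"
      by (rule continuous_on_compose2[OF C1d_cont[OF R'] gc gZ])
    have rnz: "R (g w) \<noteq> 0" if "w \<in> Zc" for w
      using that rho_pos by (auto simp: g_def Zc_def R_def cc_def split: prod.splits) (metis less_irrefl)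
    have "continuous_on Zc (\<lambda>w. K' (g w) (0, Cs w) - Pt' (g w) (0, Cs w) / R (g w))"
      by (intro continuous_intros a b r) (use rnz in auto)
    moreover have "(\<lambda>w. K' (g w) (0, Cs w) - Pt' (g w) (0, Cs w) / R (g w)) = (\<lambda>(\<tau>,s). J \<tau> s)"
      by (auto simp: J_def g_def Cs_def cc_def)
    ultimately show ?thesis by metis
  qed
  have Icont: "continuous_on UNIV (I \<tau>)" if h\<tau>: "\<tau> \<in> T" for \<tau>
  proof -
    have "continuous_on UNIV (\<lambda>s. m (\<tau>, c \<tau> s))"
      by (rule continuous_on_compose2[OF C1d_cont[OF m']])
         (use h\<tau> ccT[OF h\<tau>] in \<open>auto simp: Z_def intro!: continuous_intros\<close>)
    then have "continuous_on UNIV (\<lambda>s. m (\<tau>, c \<tau> s) \<bullet> Cf \<tau> s)"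
      using CfT[OF h\<tau>] by (intro continuous_intros)
    moreover have "(\<lambda>s. m (\<tau>, c \<tau> s) \<bullet> Cf \<tau> s) = I \<tau>" using hI[OF h\<tau>] by auto
    ultimately show ?thesis by metis
  qed
  have L: "((\<lambda>\<tau>. integral (cbox 0 1) (I \<tau>)) has_field_derivative integral (cbox 0 1) (J t0)) (at t0 within U)"
  proof (rule leibniz_rule_field_derivative)
    fix \<tau> s assume "\<tau> \<in> U" "s \<in> cbox (0::real) 1"
    then show "((\<lambda>\<tau>. I \<tau> s) has_field_derivative J \<tau> s) (at \<tau> within U)"
      using hdI U(4) has_field_derivative_at_within by blast
  next
    fix \<tau> assume "\<tau> \<in> U"
    then show "I \<tau> integrable_on cbox 0 1"
      using Icont U(4) by (meson integrable_continuous continuous_on_subset subset_UNIV subsetD)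
  next
    show "continuous_on (U \<times> cbox 0 1) (\<lambda>(x, t). J x t)"
      by (rule continuous_on_subset[OF Jc]) (use U(4) in \<open>auto simp: Zc_def\<close>)
  qed (use U in auto)
  then have L2: "((\<lambda>\<tau>. integral {0..1} (I \<tau>)) has_real_derivative integral {0..1} (J t0)) (at t0)"
    using U at_within_open by fastforce
  define kd where "kd = (\<lambda>s. K' (t0, c t0 s) (0, Cf t0 s))"
  define pd where "pd = (\<lambda>s. (1 / \<rho> t0 (c t0 s)) *
            vector_derivative (\<lambda>r. p t0 (c t0 r) + \<rho>ref * (\<zeta> t0 (c t0 r))^2 / (2 * Fr^2)) (at s))"
  have kint: "(kd has_integral 0) {0..1}"
  proof -
    have "(kd has_integral (K (t0, c t0 1) - K (t0, c t0 0))) {0..1}"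
      by (rule fundamental_theorem_of_calculus)
         (use curve_s[OF t0 K'] in \<open>auto simp: kd_def intro: has_vector_derivative_at_within\<close>)
    then show ?thesis using c_closed[OF t0] by simp
  qed
  have Jpd: "J t0 s = kd s - pd s" for s
  proof -
    have "(\<lambda>r. p t0 (c t0 r) + \<rho>ref * (\<zeta> t0 (c t0 r))^2 / (2 * Fr^2)) = (\<lambda>r. Pt (t0, c t0 r))"
      by (auto simp: Pt_def Pp_def Ze_def power2_eq_square)
    then have "vector_derivative (\<lambda>r. p t0 (c t0 r) + \<rho>ref * (\<zeta> t0 (c t0 r))^2 / (2 * Fr^2)) (at s)
        = Pt' (t0, c t0 s) (0, Cf t0 s)"
      using curve_s[OF t0 Pt', of s] by (simp add: vector_derivative_at)
    then show ?thesis by (simp add: J_def kd_def pd_def R_def)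
  qed
  have Jint: "J t0 integrable_on {0..1}"
  proof -
    have "continuous_on UNIV (\<lambda>s. (\<lambda>(\<tau>,s). J \<tau> s) (t0, s))"
      by (rule continuous_on_compose2[OF Jc]) (use t0 in \<open>auto simp: Zc_def intro!: continuous_intros\<close>)
    then show ?thesis by (auto intro: integrable_continuous_real continuous_on_subset)
  qed
  have "integral {0..1} (J t0) = - integral {0..1} pd"
  proof -
    have "pd = (\<lambda>s. kd s - J t0 s)" using Jpd by auto
    then have "integral {0..1} pd = integral {0..1} kd - integral {0..1} (J t0)"
      using integral_diff[OF has_integral_integrable[OF kint] Jint] by simp
    then show ?thesis using integral_unique[OF kint] by simp
  qed
  then have L3: "((\<lambda>\<tau>. integral {0..1} (I \<tau>)) has_real_derivative - integral {0..1} pd) (at t0)"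
    using L2 by simp
  show "((\<lambda>\<tau>. integral {0..1} (\<lambda>s.
        v \<tau> (c \<tau> s) \<bullet> vector_derivative (c \<tau>) (at s)
        + \<sigma>^2 * (pt \<zeta> \<tau> (c \<tau> s) + v \<tau> (c \<tau> s) \<bullet> grad (\<zeta> \<tau>) (c \<tau> s))
            * vector_derivative (\<lambda>r. \<zeta> \<tau> (c \<tau> r)) (at s)))
     has_real_derivative
       - integral {0..1} (\<lambda>s. (1 / \<rho> t0 (c t0 s)) *
            vector_derivative (\<lambda>r. p t0 (c t0 r) + \<rho>ref * (\<zeta> t0 (c t0 r))^2 / (2 * Fr^2)) (at s)))
    (at t0)"
    using L3 unfolding I_def pd_def .
qed


end
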